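(* Let $\mathcal{H}$ be a complex separable Hilbert space and $\mathcal{E}(\mathcal{H})$ its set of effects. The function $\mathcal{S}_0:\mathcal{E}(\mathcal{H})\to\mathbb{R}$ defined by $$\mathcal{S}_0(A):=\|A\|\,\|I-A\|-\|A(I-A)\|$$ is a sharpness measure.
   Context: An effect is a selfadjoint bounded operator $A$ on $\mathcal{H}$ with $\mathbb{O}\le A\le I$; $\mathcal{E}(\mathcal{H})$ denotes the set of effects and $A':=I-A$. An effect is trivial if $A=\lambda I$ for some $\lambda\in[0,1]$; a nontrivial projection is a projection $P=P^2=P^*$ with $P\neq \mathbb{O},I$. Norms are operator norms. A function $\mathcal{S}:\mathcal{E}(\mathcal{H})\to\mathbb{R}$ is called a sharpness measure if: (S1) $0\le\mathcal{S}(A)\le1$ for all effects $A$; (S2) $\mathcal{S}(A)=0$ iff $A$ is a trivial effect; (S3) $\mathcal{S}(A)=1$ iff $A$ is a nontrivial projection; (S4) $\mathcal{S}(A')=\mathcal{S}(A)$; (S5) $\mathcal{S}(CAC^{-1})=\mathcal{S}(A)$ for every invertible bounded operator $C$ such that $CAC^{-1}$ is an effect; (S6) $A\mapsto\mathcal{S}(A)$ is continuous with respect to the operator norm. *)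

theory Defs
  imports "HOL-Analysis.Analysis"
begin

text \<open>A complex Hilbert space: a real Banach space type 'a equipped with a complex
 scalar multiplication extending the real one and a complex inner product
 (linear in the second argument) inducing the norm.\<close>
definition complex_hilbert :: "(complex \<Rightarrow> 'a::banach \<Rightarrow> 'a) \<Rightarrow> ('a \<Rightarrow> 'a \<Rightarrow> complex) \<Rightarrow> bool" where
  "complex_hilbert cscale cinner \<longleftrightarrow>
     (\<forall>x. cscale 1 x = x) \<and>
     (\<forall>a b x. cscale a (cscale b x) = cscale (a * b) x) \<and>
     (\<forall>a x y. cscale a (x + y) = cscale a x + cscale a y) \<and>
     (\<forall>a b x. cscale (a + b) x = cscale a x + cscale b x) \<and>
     (\<forall>r x. cscale (complex_of_real r) x = scaleR r x) \<and>
     (\<forall>x y. cinner x y = cnj (cinner y x)) \<and>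
     (\<forall>x y z. cinner x (y + z) = cinner x y + cinner x z) \<and>
     (\<forall>a x y. cinner x (cscale a y) = a * cinner x y) \<and>
     (\<forall>x. cinner x x = complex_of_real ((norm x)\<^sup>2))"

definition separable_space :: "'a::metric_space itself \<Rightarrow> bool" where
  "separable_space _ \<longleftrightarrow> (\<exists>D::'a set. countable D \<and> closure D = UNIV)"

definition bounded_op :: "(complex \<Rightarrow> 'a::banach \<Rightarrow> 'a) \<Rightarrow> ('a \<Rightarrow> 'a) \<Rightarrow> bool" where
  "bounded_op cscale T \<longleftrightarrow> bounded_linear T \<and> (\<forall>c x. T (cscale c x) = cscale c (T x))"

definition selfadjoint_op :: "(complex \<Rightarrow> 'a::banach \<Rightarrow> 'a) \<Rightarrow> ('a \<Rightarrow> 'a \<Rightarrow> complex) \<Rightarrow> ('a \<Rightarrow> 'a) \<Rightarrow> bool" where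
  "selfadjoint_op cscale cinner T \<longleftrightarrow> bounded_op cscale T \<and> (\<forall>x y. cinner (T x) y = cinner x (T y))"

definition effects :: "(complex \<Rightarrow> 'a::banach \<Rightarrow> 'a) \<Rightarrow> ('a \<Rightarrow> 'a \<Rightarrow> complex) \<Rightarrow> ('a \<Rightarrow> 'a) set" where
  "effects cscale cinner = {A. selfadjoint_op cscale cinner A \<and>
      (\<forall>x. 0 \<le> Re (cinner x (A x)) \<and> Re (cinner x (A x)) \<le> Re (cinner x x))}"

definition trivial_effect :: "('a::banach \<Rightarrow> 'a) \<Rightarrow> bool" where
  "trivial_effect A \<longleftrightarrow> (\<exists>l::real. 0 \<le> l \<and> l \<le> 1 \<and> A = (\<lambda>x. scaleR l x))"

definition nontrivial_projection :: "(complex \<Rightarrow> 'a::banach \<Rightarrow> 'a) \<Rightarrow> ('a \<Rightarrow> 'a \<Rightarrow> complex) \<Rightarrow> ('a \<Rightarrow> 'a) \<Rightarrow> bool" where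
  "nontrivial_projection cscale cinner P \<longleftrightarrow>
     selfadjoint_op cscale cinner P \<and> P \<circ> P = P \<and> P \<noteq> (\<lambda>x. 0) \<and> P \<noteq> id"

definition invertible_op :: "(complex \<Rightarrow> 'a::banach \<Rightarrow> 'a) \<Rightarrow> ('a \<Rightarrow> 'a) \<Rightarrow> ('a \<Rightarrow> 'a) \<Rightarrow> bool" where
  "invertible_op cscale C D \<longleftrightarrow> bounded_op cscale C \<and> bounded_op cscale D \<and> C \<circ> D = id \<and> D \<circ> C = id"

text \<open>Sharpness measure, conditions (S1)--(S6). A' = I - A; C A C^{-1} = C \<circ> A \<circ> D.\<close>
definition sharpness_measure :: "(complex \<Rightarrow> 'a::banach \<Rightarrow> 'a) \<Rightarrow> ('a \<Rightarrow> 'a \<Rightarrow> complex) \<Rightarrow> (('a \<Rightarrow> 'a) \<Rightarrow> real) \<Rightarrow> bool" where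
  "sharpness_measure cscale cinner S \<longleftrightarrow>
     (\<forall>A\<in>effects cscale cinner. 0 \<le> S A \<and> S A \<le> 1) \<and>
     (\<forall>A\<in>effects cscale cinner. S A = 0 \<longleftrightarrow> trivial_effect A) \<and>
     (\<forall>A\<in>effects cscale cinner. S A = 1 \<longleftrightarrow> nontrivial_projection cscale cinner A) \<and>
     (\<forall>A\<in>effects cscale cinner. S (\<lambda>x. x - A x) = S A) \<and>
     (\<forall>A\<in>effects cscale cinner. \<forall>C D. invertible_op cscale C D \<and> C \<circ> A \<circ> D \<in> effects cscale cinner
          \<longrightarrow> S (C \<circ> A \<circ> D) = S A) \<and>
     (\<forall>A\<in>effects cscale cinner. \<forall>e>0. \<exists>d>0. \<forall>B\<in>effects cscale cinner.
          onorm (\<lambda>x. B x - A x) < d \<longrightarrow> \<bar>S B - S A\<bar> < e)"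

definition S0 :: "('a::banach \<Rightarrow> 'a) \<Rightarrow> real" where
  "S0 A = onorm A * onorm (\<lambda>x. x - A x) - onorm (\<lambda>x. A (x - A x))"

end

theory Submission
  imports Defs
begin

lemma discr:
  fixes a b c :: real
  assumes "\<And>t. 0 \<le> a + 2*b*t + c*t^2" "0 \<le> a" "0 \<le> c"
  shows "b^2 \<le> a*c"
proof (cases "c = 0")
  case True
  show ?thesis
  proof (rule ccontr)
    assume "\<not> ?thesis"
    then have "b \<noteq> 0" using True by simp
    have "0 \<le> a + 2*b*(-(a+1)/(2*b)) + c*(-(a+1)/(2*b))^2" by (rule assms(1))
    also have "\<dots> = -1" using True \<open>b \<noteq> 0\<close> by (simp add: field_simps)
    finally show False by simp
  qed
next
  case False
  then have c: "c > 0" using assms by simp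
  have "0 \<le> a + 2*b*(-b/c) + c*(-b/c)^2" by (rule assms(1))
  also have "\<dots> = a - b^2/c" using c by (simp add: field_simps power2_eq_square)
  finally show ?thesis using c by (simp add: field_simps)
qed

lemma real_cs:
  fixes p :: "'a::real_vector \<Rightarrow> 'a \<Rightarrow> real"
  assumes add: "\<And>x y z. p x (y + z) = p x y + p x z"
    and scale: "\<And>r x y. p x (r *\<^sub>R y) = r * p x y"
    and sym: "\<And>x y. p x y = p y x"
    and pos: "\<And>x. 0 \<le> p x x"
  shows "(p x y)^2 \<le> p x x * p y y"
proof -
  have add1: "p (y + z) x = p y x + p z x" for x y z using add sym by metis
  have scale1: "p (r *\<^sub>R y) x = r * p y x" for r x y using scale sym by metis
  have "0 \<le> p x x + 2 * p x y * t + p y y * t^2" for t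
  proof -
    have "0 \<le> p (x + t *\<^sub>R y) (x + t *\<^sub>R y)" by (rule pos)
    also have "\<dots> = p x x + 2 * p x y * t + p y y * t^2"
      by (simp add: add add1 scale scale1 sym[of y x] power2_eq_square algebra_simps)
    finally show ?thesis .
  qed
  then show ?thesis using discr pos by blast
qed

definition sbl :: "('a \<Rightarrow> 'a \<Rightarrow> complex) \<Rightarrow> ('a::real_normed_vector \<Rightarrow> 'a) \<Rightarrow> bool" where
  "sbl cinner T \<longleftrightarrow> bounded_linear T \<and> (\<forall>x y. cinner (T x) y = cinner x (T y))"

locale hil =
  fixes cscale :: "complex \<Rightarrow> 'a::banach \<Rightarrow> 'a" and cinner :: "'a \<Rightarrow> 'a \<Rightarrow> complex"
  assumes H: "complex_hilbert cscale cinner"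
begin

lemma cadd2: "cinner x (y + z) = cinner x y + cinner x z"
  using H unfolding complex_hilbert_def by blast
lemma csym: "cinner x y = cnj (cinner y x)"
  using H unfolding complex_hilbert_def by blast
lemma cscaleR2: "cinner x (r *\<^sub>R y) = of_real r * cinner x y"
proof -
  have "r *\<^sub>R y = cscale (of_real r) y" using H unfolding complex_hilbert_def by metis
  moreover have "cinner x (cscale a y) = a * cinner x y" for a
    using H unfolding complex_hilbert_def by blast
  ultimately show ?thesis by simp
qed
lemma cnorm: "cinner x x = of_real ((norm x)^2)"
  using H unfolding complex_hilbert_def by blast
lemma cadd1: "cinner (y + z) x = cinner y x + cinner z x"
  by (metis cadd2 csym complex_cnj_add)
lemma cscaleR1: "cinner (r *\<^sub>R y) x = of_real r * cinner y x"
  by (metis cscaleR2 csym complex_cnj_mult complex_cnj_complex_of_real)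
lemma cdiff2: "cinner x (y - z) = cinner x y - cinner x z"
  by (metis cadd2 diff_add_cancel eq_diff_eq)
lemma cdiff1: "cinner (y - z) x = cinner y x - cinner z x"
  by (metis cadd1 diff_add_cancel eq_diff_eq)
lemma cnormRe: "Re (cinner x x) = (norm x)^2"
  by (simp add: cnorm)

lemma Re_cs: "(Re (cinner x y))^2 \<le> (norm x)^2 * (norm y)^2"
proof -
  have "(Re (cinner x y))^2 \<le> Re (cinner x x) * Re (cinner y y)"
    by (rule real_cs[where p="\<lambda>x y. Re (cinner x y)"])
       (auto simp: cadd2 cscaleR2 cnormRe, subst csym, simp)
  then show ?thesis by (simp add: cnormRe)
qed

lemma Re_le: "Re (cinner x y) \<le> norm x * norm y"
proof -
  have "(Re (cinner x y))^2 \<le> (norm x * norm y)^2" using Re_cs by (simp add: power_mult_distrib)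
  then have "\<bar>Re (cinner x y)\<bar> \<le> \<bar>norm x * norm y\<bar>"
    using abs_le_square_iff by blast
  then show ?thesis by simp
qed

lemma sbl_cs:
  assumes T: "sbl cinner T" and pos: "\<And>x. 0 \<le> Re (cinner x (T x))"
  shows "(Re (cinner x (T y)))^2 \<le> Re (cinner x (T x)) * Re (cinner y (T y))"
proof -
  have bl: "bounded_linear T" and sy: "\<And>x y. cinner (T x) y = cinner x (T y)"
    using T unfolding sbl_def by auto
  show ?thesis
  proof (rule real_cs[where p="\<lambda>x y. Re (cinner x (T y))"])
    show "Re (cinner x (T (y + z))) = Re (cinner x (T y)) + Re (cinner x (T z))" for x y z
      by (simp add: linear_simps bl cadd2)
    show "Re (cinner x (T (r *\<^sub>R y))) = r * Re (cinner x (T y))" for r x y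
      by (simp add: linear_simps bl cscaleR2)
    show "Re (cinner x (T y)) = Re (cinner y (T x))" for x y
      by (subst csym) (simp add: sy)
  qed (rule pos)
qed

lemma sbl_sq: "sbl cinner T \<Longrightarrow> Re (cinner x (T (T x))) = (norm (T x))^2"
  unfolding sbl_def by (metis cnormRe)

lemma pos_sq:
  assumes T: "sbl cinner T" and pos: "\<And>x. 0 \<le> Re (cinner x (T x))"
  shows "(norm (T x))^4 \<le> Re (cinner x (T x)) * Re (cinner (T x) (T (T x)))"
proof -
  have "(Re (cinner x (T (T x))))^2 \<le> Re (cinner x (T x)) * Re (cinner (T x) (T (T x)))"
    by (rule sbl_cs[OF T pos])
  moreover have "(Re (cinner x (T (T x))))^2 = (norm (T x))^4"
    using sbl_sq[OF T] by simp
  ultimately show ?thesis by simp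
qed

lemma L:
  assumes T: "sbl cinner T" and pos: "\<And>x. 0 \<le> Re (cinner x (T x))"
    and K: "\<And>x. Re (cinner x (T x)) \<le> K * (norm x)^2"
  shows "norm (T x) \<le> K * norm x"
proof (cases "T x = 0")
  case True
  show ?thesis
  proof (cases "x = 0")
    case False
    have "0 \<le> K * (norm x)^2" using pos[of x] K[of x] by linarith
    then have "0 \<le> K" using False by (simp add: zero_le_mult_iff)
    then show ?thesis using True by simp
  qed (use True T in \<open>simp add: sbl_def linear_simps\<close>)
next
  case False
  let ?y = "T x"
  have "0 \<le> K * (norm ?y)^2" using pos[of ?y] K[of ?y] by linarith
  then have K0: "0 \<le> K" using False by (simp add: zero_le_mult_iff)
  have "(norm ?y)^4 \<le> (K * (norm x)^2) * (K * (norm ?y)^2)"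
    using pos_sq[OF T pos, of x] pos[of x] pos[of ?y] K[of x] K[of ?y]
    by (meson mult_mono order_trans)
  then have "(norm ?y)^2 * (norm ?y)^2 \<le> (K * norm x)^2 * (norm ?y)^2"
    by (simp add: power2_eq_square algebra_simps power4_eq_xxxx)
  moreover have "0 < (norm ?y)^2" using False by simp
  ultimately have "(norm ?y)^2 \<le> (K * norm x)^2"
    using mult_right_le_imp_le by blast
  then show ?thesis using K0 by (meson norm_ge_zero power2_le_imp_le mult_nonneg_nonneg)
qed

lemma eff_sbl: "A \<in> effects cscale cinner \<Longrightarrow> sbl cinner A"
  unfolding effects_def selfadjoint_op_def bounded_op_def sbl_def by auto

lemma eff_bl: "A \<in> effects cscale cinner \<Longrightarrow> bounded_linear A"
  using eff_sbl sbl_def by blast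

lemma eff_pos: "A \<in> effects cscale cinner \<Longrightarrow> 0 \<le> Re (cinner x (A x))"
  unfolding effects_def by auto

lemma eff_le: "A \<in> effects cscale cinner \<Longrightarrow> Re (cinner x (A x)) \<le> (norm x)^2"
  unfolding effects_def by (auto simp: cnormRe)

lemma sbl_bl: "sbl cinner T \<Longrightarrow> bounded_linear T"
  unfolding sbl_def by auto

lemma sbl_I: "sbl cinner T \<Longrightarrow> sbl cinner (\<lambda>x. x - T x)"
  unfolding sbl_def
  by (auto intro!: bounded_linear_sub bounded_linear_ident simp: cdiff1 cdiff2)

lemma sbl_sq2: assumes T: "sbl cinner T" shows "sbl cinner (T \<circ> T)"
  using T bounded_linear_compose[of T T] unfolding sbl_def comp_def by auto

lemma sbl_Q:
  assumes T: "sbl cinner T" shows "sbl cinner (\<lambda>x. T (x - T x))"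
proof -
  have bl: "bounded_linear T" and sy: "\<And>x y. cinner (T x) y = cinner x (T y)"
    using T unfolding sbl_def by auto
  have "bounded_linear (\<lambda>x. T (x - T x))"
    by (rule bounded_linear_compose[OF bl bounded_linear_sub[OF bounded_linear_ident bl]])
  moreover have "cinner (T (x - T x)) y = cinner x (T (y - T y))" for x y
    by (simp add: sy cdiff1 cdiff2 linear_simps bl)
  ultimately show ?thesis unfolding sbl_def by auto
qed

lemma norm_le1:
  assumes T: "sbl cinner T" and pos: "\<And>x. 0 \<le> Re (cinner x (T x))"
    and le: "\<And>x. Re (cinner x (T x)) \<le> (norm x)^2"
  shows "onorm T \<le> 1"
  by (rule onorm_bound) (use L[OF T pos, of 1] le in auto)

lemma eff_onorm: "A \<in> effects cscale cinner \<Longrightarrow> onorm A \<le> 1"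
  by (rule norm_le1[OF eff_sbl eff_pos eff_le])

lemma eff_onormI: assumes A: "A \<in> effects cscale cinner" shows "onorm (\<lambda>x. x - A x) \<le> 1"
proof (rule norm_le1[OF sbl_I[OF eff_sbl[OF A]]])
  have bl: "bounded_linear A" using eff_bl[OF A] .
  fix x
  have e: "Re (cinner x (x - A x)) = (norm x)^2 - Re (cinner x (A x))"
    by (simp add: cdiff2 cnormRe)
  show "0 \<le> Re (cinner x (x - A x))" using e eff_le[OF A] by simp
  show "Re (cinner x (x - A x)) \<le> (norm x)^2" using e eff_pos[OF A] by simp
qed

lemma eff_Ax:
  assumes A: "A \<in> effects cscale cinner"
  shows "(norm (A x))^2 \<le> Re (cinner x (A x))"
proof (cases "A x = 0")
  case False
  have "(norm (A x))^4 \<le> Re (cinner x (A x)) * Re (cinner (A x) (A (A x)))"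
    by (rule pos_sq[OF eff_sbl[OF A] eff_pos[OF A]])
  also have "\<dots> \<le> Re (cinner x (A x)) * (norm (A x))^2"
    using eff_le[OF A, of "A x"] eff_pos[OF A, of x] by (simp add: mult_left_mono)
  finally have "(norm (A x))^2 * (norm (A x))^2 \<le> Re (cinner x (A x)) * (norm (A x))^2"
    by (simp add: power4_eq_xxxx power2_eq_square)
  moreover have "0 < (norm (A x))^2" using False by simp
  ultimately show ?thesis using mult_right_le_imp_le by blast
qed (use eff_pos[OF A, of x] in simp)

lemma Q_form:
  assumes A: "A \<in> effects cscale cinner"
  shows "Re (cinner x (A (x - A x))) = Re (cinner x (A x)) - (norm (A x))^2"
  using sbl_sq[OF eff_sbl[OF A], of x] eff_bl[OF A]
  by (simp add: linear_simps cdiff2)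

lemma Q_pos:
  assumes A: "A \<in> effects cscale cinner"
  shows "0 \<le> Re (cinner x (A (x - A x)))"
  using Q_form[OF A] eff_Ax[OF A] by simp

lemma onorm_sq:
  assumes X: "sbl cinner X" shows "onorm (X \<circ> X) = (onorm X)^2"
proof (rule antisym)
  have bl: "bounded_linear X" using sbl_bl[OF X] .
  have bl2: "bounded_linear (X \<circ> X)" using sbl_bl[OF sbl_sq2[OF X]] .
  show "onorm (X \<circ> X) \<le> (onorm X)^2"
    using onorm_compose[OF bl bl] by (simp add: power2_eq_square)
  let ?o = "onorm (X \<circ> X)"
  have o0: "0 \<le> ?o" by (rule onorm_pos_le[OF bl2])
  have "norm (X x) \<le> sqrt ?o * norm x" for x
  proof -
    have "(norm (X x))^2 = Re (cinner x (X (X x)))" using sbl_sq[OF X] by simp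
    also have "\<dots> \<le> norm x * norm (X (X x))" by (rule Re_le)
    also have "\<dots> \<le> norm x * (?o * norm x)"
      using onorm[OF bl2, of x] by (simp add: mult_left_mono)
    also have "\<dots> = (sqrt ?o * norm x)^2" using o0 by (simp add: power_mult_distrib power2_eq_square)
    finally show ?thesis using o0 by (meson power2_le_imp_le mult_nonneg_nonneg real_sqrt_ge_zero norm_ge_zero)
  qed
  then have "onorm X \<le> sqrt ?o" by (intro onorm_bound) (auto simp: o0)
  then have "(onorm X)^2 \<le> (sqrt ?o)^2" using onorm_pos_le[OF bl] by (simp add: power_mono)
  then show "(onorm X)^2 \<le> ?o" using o0 by simp
qed

lemma onorm_pow:
  assumes X: "sbl cinner X" shows "sbl cinner (X^^(2^k)) \<and> onorm (X^^(2^k)) = (onorm X)^(2^k)"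
proof (induction k)
  case 0
  then show ?case using X by simp
next
  case (Suc k)
  have e: "X^^(2^Suc k) = X^^(2^k) \<circ> X^^(2^k)"
    by (simp add: funpow_add[symmetric] mult_2)
  have s: "sbl cinner (X^^(2^k))" and n: "onorm (X^^(2^k)) = (onorm X)^(2^k)" using Suc by auto
  have "onorm (X^^(2^k) \<circ> X^^(2^k)) = ((onorm X)^(2^k))^2" using onorm_sq[OF s] n by simp
  also have "\<dots> = (onorm X)^(2^Suc k)" by (simp add: power_mult[symmetric] mult.commute)
  finally show ?case unfolding e using sbl_sq2[OF s] by (simp only:)
qed

lemma sim_pow:
  assumes "C \<circ> D = id" "D \<circ> C = id"
  shows "(C \<circ> X \<circ> D)^^n = C \<circ> X^^n \<circ> D"
proof (induction n)
  case 0 then show ?case using assms by simp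
next
  case (Suc n)
  have "(C \<circ> X \<circ> D)^^Suc n = (C \<circ> X \<circ> D) \<circ> (C \<circ> X^^n \<circ> D)" by (simp only: funpow.simps(2) Suc.IH)
  also have "\<dots> = C \<circ> X \<circ> (D \<circ> C) \<circ> X^^n \<circ> D" by (simp add: comp_assoc)
  also have "\<dots> = C \<circ> X^^Suc n \<circ> D" using assms by (simp add: comp_assoc)
  finally show ?case .
qed

lemma G_le:
  assumes X: "sbl cinner X" and Y: "sbl cinner Y" and C: "bounded_linear C" and D: "bounded_linear D"
    and CD: "C \<circ> D = id" and DC: "D \<circ> C = id" and YX: "Y = C \<circ> X \<circ> D"
  shows "onorm Y \<le> onorm X"
proof -
  define K where "K = onorm C * onorm D"
  have oC: "0 \<le> onorm C" and oD: "0 \<le> onorm D" using onorm_pos_le C D by auto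
  have key: "(onorm Y)^(2^k) \<le> K * (onorm X)^(2^k)" for k
  proof -
    have Xk: "sbl cinner (X^^(2^k))" and nX: "onorm (X^^(2^k)) = (onorm X)^(2^k)"
      using onorm_pow[OF X] by auto
    have nY: "onorm (Y^^(2^k)) = (onorm Y)^(2^k)" using onorm_pow[OF Y] by auto
    have blX: "bounded_linear (X^^(2^k))" using sbl_bl[OF Xk] .
    have "Y^^(2^k) = C \<circ> (X^^(2^k) \<circ> D)" using sim_pow[OF CD DC] YX by (simp add: comp_assoc)
    then have "onorm (Y^^(2^k)) \<le> onorm C * onorm (X^^(2^k) \<circ> D)"
      using onorm_compose[OF C bounded_linear_compose[OF blX D]] by (simp add: comp_def)
    also have "\<dots> \<le> onorm C * (onorm (X^^(2^k)) * onorm D)"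
      using onorm_compose[OF blX D] oC by (simp add: mult_left_mono)
    finally show ?thesis using nX nY K_def by (simp add: algebra_simps)
  qed
  show ?thesis
  proof (rule ccontr)
    assume "\<not> ?thesis"
    then have gt: "onorm X < onorm Y" by simp
    have x0: "0 \<le> onorm X" using onorm_pos_le[OF sbl_bl[OF X]] .
    show False
    proof (cases "onorm X = 0")
      case True
      then show False using key[of 0] gt by simp
    next
      case False
      then have xp: "0 < onorm X" using x0 by simp
      define r where "r = onorm Y / onorm X"
      have r1: "1 < r" using gt xp by (simp add: r_def)
      obtain n where n: "K < r^n" using real_arch_pow[OF r1] by blast
      have "r^n \<le> r^(2^n)" using r1 by (intro power_increasing) (auto intro: less_imp_le less_exp)
      also have "r^(2^n) = (onorm Y)^(2^n) / (onorm X)^(2^n)" by (simp add: r_def power_divide)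
      also have "\<dots> \<le> K" using key[of n] xp by (simp add: divide_le_eq)
      finally show False using n by simp
    qed
  qed
qed

lemma G:
  assumes X: "sbl cinner X" and Y: "sbl cinner Y" and C: "bounded_linear C" and D: "bounded_linear D"
    and CD: "C \<circ> D = id" and DC: "D \<circ> C = id" and YX: "Y = C \<circ> X \<circ> D"
  shows "onorm Y = onorm X"
proof (rule antisym)
  show "onorm Y \<le> onorm X" by (rule G_le[OF assms])
  have dc: "D (C y) = y" for y using fun_cong[OF DC] by simp
  have "X = D \<circ> Y \<circ> C" unfolding YX by (simp add: fun_eq_iff dc)
  then show "onorm X \<le> onorm Y" by (intro G_le[OF Y X D C DC CD])
qed

lemma onorm_diff_le:
  assumes f: "bounded_linear f" and g: "bounded_linear g"
  shows "\<bar>onorm f - onorm g\<bar> \<le> onorm (\<lambda>x. f x - g x)"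
proof -
  have fg: "bounded_linear (\<lambda>x. f x - g x)" by (rule bounded_linear_sub[OF f g])
  have gf: "bounded_linear (\<lambda>x. g x - f x)" by (rule bounded_linear_sub[OF g f])
  have "onorm f = onorm (\<lambda>x. g x + (f x - g x))" by simp
  also have "\<dots> \<le> onorm g + onorm (\<lambda>x. f x - g x)" by (rule onorm_triangle[OF g fg])
  finally have 1: "onorm f - onorm g \<le> onorm (\<lambda>x. f x - g x)" by simp
  have "onorm g = onorm (\<lambda>x. f x + (g x - f x))" by simp
  also have "\<dots> \<le> onorm f + onorm (\<lambda>x. g x - f x)" by (rule onorm_triangle[OF f gf])
  also have "onorm (\<lambda>x. g x - f x) = onorm (\<lambda>x. - (f x - g x))" by simp
  also have "\<dots> = onorm (\<lambda>x. f x - g x)" by (rule onorm_neg)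
  finally have 2: "onorm g - onorm f \<le> onorm (\<lambda>x. f x - g x)" by simp
  from 1 2 show ?thesis by linarith
qed

lemma gap:
  fixes m M :: real
  assumes "m < M" "0 \<le> m" "M \<le> 1"
  shows "\<exists>d>0. \<forall>t. m \<le> t \<longrightarrow> t \<le> M \<longrightarrow> t - t^2 \<le> M * (1 - m) - d"
proof -
  define d where "d = min ((M - m) * (1 - m) / 2) (M * (M - m) / 4)"
  have d0: "d > 0" using assms by (simp add: d_def)
  have "t - t^2 \<le> M * (1 - m) - d" if t: "m \<le> t" "t \<le> M" for t
  proof -
    have eq: "M * (1 - m) - (t - t^2) = (M - t) * (1 - m) + t * (t - m)"
      by (simp add: algebra_simps power2_eq_square)
    show ?thesis
    proof (cases "t \<le> (m + M) / 2")
      case True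
      have "(M - m) / 2 * (1 - m) \<le> (M - t) * (1 - m)"
        using True assms by (intro mult_right_mono) auto
      moreover have "0 \<le> t * (t - m)" using t assms by simp
      moreover have "d \<le> (M - m) * (1 - m) / 2" by (simp add: d_def)
      ultimately show ?thesis using eq by (simp add: field_simps)
    next
      case False
      have "M / 2 * ((M - m) / 2) \<le> t * (t - m)"
        using False assms by (intro mult_mono) auto
      moreover have "0 \<le> (M - t) * (1 - m)" using t assms by simp
      moreover have "d \<le> M * (M - m) / 4" by (simp add: d_def)
      ultimately show ?thesis using eq by (simp add: field_simps)
    qed
  qed
  then show ?thesis using d0 by blast
qed

lemma cinner0: "cinner 0 y = 0"
  using cadd1[of 0 0 y] by simp

lemma S2hard:
  assumes A: "A \<in> effects cscale cinner" and S: "S0 A = 0"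
  shows "trivial_effect A"
proof -
  have bl: "bounded_linear A" using eff_bl[OF A] .
  have blI: "bounded_linear (\<lambda>x. x - A x)" by (rule bounded_linear_sub[OF bounded_linear_ident bl])
  define a where "a = onorm A"
  define b where "b = onorm (\<lambda>x. x - A x)"
  define c where "c = onorm (\<lambda>x. A (x - A x))"
  have c_ab: "c = a * b" using S unfolding S0_def a_def b_def c_def by simp
  have a0: "0 \<le> a" and b0: "0 \<le> b" using onorm_pos_le[OF bl] onorm_pos_le[OF blI] a_def b_def by auto
  have a1: "a \<le> 1" using eff_onorm[OF A] a_def by simp
  have b1: "b \<le> 1" using eff_onormI[OF A] b_def by simp
  have qa: "Re (cinner x (A x)) \<le> a * (norm x)^2" for x
  proof -
    have "Re (cinner x (A x)) \<le> norm x * norm (A x)" by (rule Re_le)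
    also have "\<dots> \<le> norm x * (a * norm x)" using onorm[OF bl, of x] a_def by (simp add: mult_left_mono)
    finally show ?thesis by (simp add: power2_eq_square algebra_simps)
  qed
  have qb: "(1 - b) * (norm x)^2 \<le> Re (cinner x (A x))" for x
  proof -
    have "Re (cinner x (x - A x)) \<le> norm x * norm (x - A x)" by (rule Re_le)
    also have "\<dots> \<le> norm x * (b * norm x)" using onorm[OF blI, of x] b_def by (simp add: mult_left_mono)
    finally show ?thesis by (simp add: cdiff2 cnormRe power2_eq_square algebra_simps)
  qed
  show ?thesis
  proof (cases "a + b \<le> 1")
    case True
    define T where "T = (\<lambda>x. A x - a *\<^sub>R x)"
    have sT: "sbl cinner T"
    proof -
      have "bounded_linear T" unfolding T_def
        by (rule bounded_linear_sub[OF bl bounded_linear_scaleR_right])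
      moreover have "cinner (T x) y = cinner x (T y)" for x y
        using eff_sbl[OF A] unfolding T_def sbl_def by (simp add: cdiff1 cdiff2 cscaleR1 cscaleR2)
      ultimately show ?thesis unfolding sbl_def by auto
    qed
    have form: "Re (cinner x (T x)) = 0" for x
    proof -
      have "Re (cinner x (T x)) = Re (cinner x (A x)) - a * (norm x)^2"
        unfolding T_def by (simp add: cdiff2 cscaleR2 cnormRe)
      moreover have "(1 - b) * (norm x)^2 \<ge> a * (norm x)^2"
        using True by (intro mult_right_mono) auto
      ultimately show ?thesis using qa[of x] qb[of x] by linarith
    qed
    have "norm (T x) \<le> 0 * norm x" for x by (rule L[OF sT]) (simp_all add: form)
    then have "A x = a *\<^sub>R x" for x unfolding T_def by simp
    then have "A = (\<lambda>x. a *\<^sub>R x)" by auto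
    then show ?thesis unfolding trivial_effect_def using a0 a1 by blast
  next
    case False
    define m where "m = 1 - b"
    have mM: "m < a" "0 \<le> m" using False b1 by (auto simp: m_def)
    obtain d where d0: "d > 0" and dd: "\<And>t. m \<le> t \<Longrightarrow> t \<le> a \<Longrightarrow> t - t^2 \<le> a * (1 - m) - d"
      using gap[OF mM(1) mM(2) a1] by blast
    have ab: "a * (1 - m) = a * b" by (simp add: m_def)
    define Q where "Q = (\<lambda>x. A (x - A x))"
    have Qform: "Re (cinner x (Q x)) \<le> (a * b - d) * (norm x)^2" for x
    proof (cases "x = 0")
      case True then show ?thesis unfolding Q_def using bl by (simp add: linear_simps cinner0)
    next
      case False
      define n where "n = (norm x)^2"
      define q where "q = Re (cinner x (A x))"
      have n0: "n > 0" using False by (simp add: n_def)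
      define t where "t = q / n"
      have qt: "q = n * t" using n0 by (simp add: t_def)
      have "m * n \<le> q" using qb[of x] by (simp add: m_def n_def q_def mult.commute)
      then have tm: "m \<le> t" using n0 qt by (simp add: mult.commute)
      have "q \<le> a * n" using qa[of x] by (simp add: n_def q_def)
      then have ta: "t \<le> a" using n0 qt by (simp add: mult.commute)
      have cs: "q^2 \<le> n * (norm (A x))^2" using Re_cs[of x "A x"] by (simp add: q_def n_def)
      have "n * t^2 \<le> (norm (A x))^2"
      proof -
        have "n * (n * t^2) \<le> n * (norm (A x))^2" using cs qt by (simp add: power2_eq_square algebra_simps)
        then show ?thesis using n0 by simp
      qed
      then have "Re (cinner x (Q x)) \<le> n * (t - t^2)"
        using Q_form[OF A, of x] unfolding Q_def q_def[symmetric] by (simp add: qt algebra_simps)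
      also have "\<dots> \<le> n * (a * b - d)" using dd[OF tm ta] ab n0 by simp
      finally show ?thesis by (simp add: n_def mult.commute)
    qed
    have sQ: "sbl cinner Q" unfolding Q_def by (rule sbl_Q[OF eff_sbl[OF A]])
    have Qp: "0 \<le> Re (cinner x (Q x))" for x unfolding Q_def by (rule Q_pos[OF A])
    have "0 < a" using mM by simp
    then obtain x where "A x \<noteq> 0" using onorm_pos_lt[OF bl] a_def by auto
    then have "x \<noteq> 0" using bl by (auto simp: linear_simps)
    then have "0 < (norm x)^2" by simp
    moreover have "0 \<le> (a * b - d) * (norm x)^2" using Qp[of x] Qform[of x] by linarith
    ultimately have "0 \<le> a * b - d" by (simp add: zero_le_mult_iff)
    then have "c \<le> a * b - d" unfolding c_def Q_def[symmetric]
      by (intro onorm_bound) (auto intro: L[OF sQ Qp Qform])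
    then show ?thesis using c_ab d0 by simp
  qed
qed

lemma S0_cont:
  assumes A: "A \<in> effects cscale cinner" and B: "B \<in> effects cscale cinner"
  shows "\<bar>S0 B - S0 A\<bar> \<le> 5 * onorm (\<lambda>x. B x - A x)"
proof -
  have blA: "bounded_linear A" using eff_bl[OF A] .
  have blB: "bounded_linear B" using eff_bl[OF B] .
  have blIA: "bounded_linear (\<lambda>x. x - A x)" by (rule bounded_linear_sub[OF bounded_linear_ident blA])
  have blIB: "bounded_linear (\<lambda>x. x - B x)" by (rule bounded_linear_sub[OF bounded_linear_ident blB])
  have blQA: "bounded_linear (\<lambda>x. A (x - A x))" by (rule bounded_linear_compose[OF blA blIA])
  have blQB: "bounded_linear (\<lambda>x. B (x - B x))" by (rule bounded_linear_compose[OF blB blIB])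
  have blE: "bounded_linear (\<lambda>x. B x - A x)" by (rule bounded_linear_sub[OF blB blA])
  define d where "d = onorm (\<lambda>x. B x - A x)"
  define aA where "aA = onorm A"
  define aB where "aB = onorm B"
  define bA where "bA = onorm (\<lambda>x. x - A x)"
  define bB where "bB = onorm (\<lambda>x. x - B x)"
  have aA0: "0 \<le> aA" "aA \<le> 1" using onorm_pos_le[OF blA] eff_onorm[OF A] aA_def by auto
  have aB0: "0 \<le> aB" "aB \<le> 1" using onorm_pos_le[OF blB] eff_onorm[OF B] aB_def by auto
  have bA0: "0 \<le> bA" "bA \<le> 1" using onorm_pos_le[OF blIA] eff_onormI[OF A] bA_def by auto
  have bB0: "0 \<le> bB" "bB \<le> 1" using onorm_pos_le[OF blIB] eff_onormI[OF B] bB_def by auto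
  have d0: "0 \<le> d" using onorm_pos_le[OF blE] d_def by simp
  have 1: "\<bar>aB - aA\<bar> \<le> d" using onorm_diff_le[OF blB blA] aA_def aB_def d_def by simp
  have "\<bar>bB - bA\<bar> \<le> onorm (\<lambda>x. (x - B x) - (x - A x))"
    using onorm_diff_le[OF blIB blIA] bA_def bB_def by simp
  also have "onorm (\<lambda>x. (x - B x) - (x - A x)) = onorm (\<lambda>x. - (B x - A x))" by simp
  finally have 2: "\<bar>bB - bA\<bar> \<le> d" using onorm_neg d_def by metis
  have 3: "\<bar>onorm (\<lambda>x. B (x - B x)) - onorm (\<lambda>x. A (x - A x))\<bar> \<le> 3 * d"
  proof -
    have "onorm (\<lambda>x. B (x - B x) - A (x - A x)) \<le> 3 * d"
    proof (rule onorm_bound)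
      show "0 \<le> 3 * d" using d0 by simp
      fix x
      let ?E = "\<lambda>x. B x - A x"
      have eq: "B (x - B x) - A (x - A x) = ?E x - B (?E x) - ?E (A x)"
        using blA blB by (simp add: linear_simps algebra_simps)
      have "norm (?E x - B (?E x) - ?E (A x)) \<le> norm (?E x) + norm (B (?E x)) + norm (?E (A x))"
        by (meson norm_triangle_ineq4 norm_triangle_le_diff order_trans add_mono order_refl)
      also have "\<dots> \<le> d * norm x + aB * (d * norm x) + d * (aA * norm x)"
      proof -
        have e1: "norm (?E x) \<le> d * norm x" using onorm[OF blE] d_def by simp
        have "norm (B (?E x)) \<le> aB * norm (?E x)" using onorm[OF blB] aB_def by simp
        also have "\<dots> \<le> aB * (d * norm x)" using e1 aB0 by (simp add: mult_left_mono)
        finally have e2: "norm (B (?E x)) \<le> aB * (d * norm x)" .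
        have "norm (?E (A x)) \<le> d * norm (A x)" using onorm[OF blE] d_def by simp
        also have "\<dots> \<le> d * (aA * norm x)" using onorm[OF blA] aA_def d0 by (simp add: mult_left_mono)
        finally show ?thesis using e1 e2 by simp
      qed
      also have "\<dots> \<le> 3 * d * norm x"
      proof -
        have "aB * (d * norm x) \<le> 1 * (d * norm x)" using aB0 d0 by (intro mult_right_mono) auto
        moreover have "d * (aA * norm x) \<le> d * (1 * norm x)" using aA0 d0 by (intro mult_left_mono mult_right_mono) auto
        ultimately show ?thesis by simp
      qed
      finally show "norm (B (x - B x) - A (x - A x)) \<le> 3 * d * norm x" using eq by simp
    qed
    then show ?thesis using onorm_diff_le[OF blQB blQA] by linarith
  qed
  have 4: "\<bar>aB * bB - aA * bA\<bar> \<le> 2 * d"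
  proof -
    have "aB * bB - aA * bA = (aB - aA) * bB + aA * (bB - bA)" by (simp add: algebra_simps)
    then have "\<bar>aB * bB - aA * bA\<bar> \<le> \<bar>aB - aA\<bar> * bB + aA * \<bar>bB - bA\<bar>"
      using aA0 bB0 by (simp add: abs_mult) (metis abs_triangle_ineq abs_mult abs_of_nonneg)
    also have "\<dots> \<le> d * 1 + 1 * d"
      using 1 2 aA0 bB0 by (intro add_mono mult_mono) auto
    finally show ?thesis by simp
  qed
  show ?thesis using 3 4 unfolding S0_def aA_def aB_def bA_def bB_def d_def by linarith
qed

lemma S0_trivial:
  assumes "trivial_effect (A :: 'a \<Rightarrow> 'a)" shows "S0 A = 0"
proof -
  obtain l where l: "0 \<le> l" "l \<le> 1" and A: "A = (\<lambda>x. l *\<^sub>R x)"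
    using assms unfolding trivial_effect_def by blast
  define n0 where "n0 = onorm (\<lambda>x::'a. x)"
  have n01: "n0 * n0 = n0"
  proof (cases "\<exists>x::'a. x \<noteq> 0")
    case True
    then obtain x :: 'a where x: "x \<noteq> 0" by blast
    have "norm x \<le> n0 * norm x" using onorm[OF bounded_linear_ident, of x] n0_def by simp
    then have "1 \<le> n0" using x by simp
    then have "n0 = 1" using onorm_id_le[where 'a='a] n0_def by linarith
    then show ?thesis by simp
  next
    case False
    then have "(\<lambda>x::'a. x) = (\<lambda>x. 0)" by auto
    then have "n0 = 0" using onorm_zero n0_def by simp
    then show ?thesis by simp
  qed
  have e1: "onorm A = l * n0" using onorm_scaleR[OF bounded_linear_ident, of l] l A n0_def by simp
  have "(\<lambda>x. x - A x) = (\<lambda>x. (1 - l) *\<^sub>R x)" using A by (auto simp: fun_eq_iff algebra_simps)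
  then have e2: "onorm (\<lambda>x. x - A x) = (1 - l) * n0"
    using onorm_scaleR[OF bounded_linear_ident, of "1 - l"] l n0_def by simp
  have "(\<lambda>x. A (x - A x)) = (\<lambda>x. (l * (1 - l)) *\<^sub>R x)" using A by (auto simp: fun_eq_iff algebra_simps)
  then have e3: "onorm (\<lambda>x. A (x - A x)) = (l * (1 - l)) * n0"
    using onorm_scaleR[OF bounded_linear_ident, of "l * (1 - l)"] l n0_def by simp
  have "S0 A = l * (1 - l) * (n0 * n0 - n0)" unfolding S0_def e1 e2 e3 by (simp add: algebra_simps)
  then show ?thesis using n01 by simp
qed

lemma S0_bounds:
  assumes A: "A \<in> effects cscale cinner"
  shows "0 \<le> S0 A" "S0 A \<le> 1"
proof -
  have bl: "bounded_linear A" using eff_bl[OF A] .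
  have blI: "bounded_linear (\<lambda>x. x - A x)" by (rule bounded_linear_sub[OF bounded_linear_ident bl])
  have "onorm (\<lambda>x. A (x - A x)) \<le> onorm A * onorm (\<lambda>x. x - A x)"
    using onorm_compose[OF bl blI] by (simp add: comp_def)
  then show "0 \<le> S0 A" unfolding S0_def by simp
  have "onorm A * onorm (\<lambda>x. x - A x) \<le> 1 * 1"
    using eff_onorm[OF A] eff_onormI[OF A] onorm_pos_le[OF bl] onorm_pos_le[OF blI]
    by (intro mult_mono) auto
  moreover have "0 \<le> onorm (\<lambda>x. A (x - A x))"
    by (rule onorm_pos_le[OF bounded_linear_compose[OF bl blI]])
  ultimately show "S0 A \<le> 1" unfolding S0_def by simp
qed

lemma S3:
  assumes A: "A \<in> effects cscale cinner"
  shows "S0 A = 1 \<longleftrightarrow> nontrivial_projection cscale cinner A"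
proof -
  have bl: "bounded_linear A" using eff_bl[OF A] .
  have blI: "bounded_linear (\<lambda>x. x - A x)" by (rule bounded_linear_sub[OF bounded_linear_ident bl])
  have blQ: "bounded_linear (\<lambda>x. A (x - A x))" by (rule bounded_linear_compose[OF bl blI])
  define a where "a = onorm A"
  define b where "b = onorm (\<lambda>x. x - A x)"
  define c where "c = onorm (\<lambda>x. A (x - A x))"
  have a0: "0 \<le> a" "a \<le> 1" using onorm_pos_le[OF bl] eff_onorm[OF A] a_def by auto
  have b0: "0 \<le> b" "b \<le> 1" using onorm_pos_le[OF blI] eff_onormI[OF A] b_def by auto
  have c0: "0 \<le> c" using onorm_pos_le[OF blQ] c_def by auto
  have sa: "selfadjoint_op cscale cinner A" using A unfolding effects_def by auto
  have S: "S0 A = a * b - c" unfolding S0_def a_def b_def c_def by simp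
  show ?thesis
  proof
    assume "S0 A = 1"
    then have abc: "a * b - c = 1" using S by simp
    have "a * b \<le> a" using a0 b0 by (simp add: mult_left_le)
    moreover have "a * b \<le> b" using a0 b0 by (simp add: mult_left_le_one_le)
    ultimately have "a = 1" "b = 1" "c = 0" using abc a0 b0 c0 by auto
    have "\<forall>x. A (x - A x) = 0" using onorm_eq_0[OF blQ] \<open>c = 0\<close> c_def by simp
    then have "A \<circ> A = A" using bl by (auto simp: fun_eq_iff linear_simps)
    moreover have "A \<noteq> (\<lambda>x. 0)"
    proof
      assume "A = (\<lambda>x. 0)"
      then have "a = 0" unfolding a_def by (simp add: onorm_zero)
      then show False using \<open>a = 1\<close> by simp
    qed
    moreover have "A \<noteq> id"
    proof
      assume "A = id"
      then have "(\<lambda>x. x - A x) = (\<lambda>x. 0)" by auto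
      then have "b = 0" unfolding b_def by (simp add: onorm_zero)
      then show False using \<open>b = 1\<close> by simp
    qed
    ultimately show "nontrivial_projection cscale cinner A"
      unfolding nontrivial_projection_def using sa by blast
  next
    assume P: "nontrivial_projection cscale cinner A"
    then have AA: "A \<circ> A = A" and n0: "A \<noteq> (\<lambda>x. 0)" and nid: "A \<noteq> id"
      unfolding nontrivial_projection_def by auto
    have AAx: "A (A x) = A x" for x using fun_cong[OF AA, of x] by simp
    have "\<forall>x. A (x - A x) = 0" using bl AAx by (simp add: linear_simps)
    then have "c = 0" using onorm_eq_0[OF blQ] c_def by simp
    obtain x where x: "A x \<noteq> 0" using n0 by auto
    have "norm (A (A x)) \<le> a * norm (A x)" using onorm[OF bl] a_def by simp
    then have "1 \<le> a" using x AAx by simp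
    obtain y where y: "A y \<noteq> y" using nid by (auto simp: fun_eq_iff)
    let ?z = "y - A y"
    have z: "?z - A ?z = ?z" using bl AAx by (simp add: linear_simps)
    have "norm (?z - A ?z) \<le> b * norm ?z" using onorm[OF blI] b_def by simp
    then have "1 \<le> b" using z y by simp
    show "S0 A = 1" using S \<open>c = 0\<close> \<open>1 \<le> a\<close> \<open>1 \<le> b\<close> a0 b0 by simp
  qed
qed

lemma S4:
  assumes A: "A \<in> effects cscale cinner"
  shows "S0 (\<lambda>x. x - A x) = S0 A"
proof -
  have bl: "bounded_linear A" using eff_bl[OF A] .
  have "(\<lambda>x. (x - (x - A x)) - A (x - (x - A x))) = (\<lambda>x. A (x - A x))"
    using bl by (auto simp: fun_eq_iff linear_simps)
  then show ?thesis unfolding S0_def by (simp add: mult.commute)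
qed

lemma S5:
  assumes A: "A \<in> effects cscale cinner" and CD: "invertible_op cscale C D"
    and B: "C \<circ> A \<circ> D \<in> effects cscale cinner"
  shows "S0 (C \<circ> A \<circ> D) = S0 A"
proof -
  have C: "bounded_linear C" and D: "bounded_linear D" and cd: "C \<circ> D = id" and dc: "D \<circ> C = id"
    using CD unfolding invertible_op_def bounded_op_def by auto
  have cdx: "C (D x) = x" for x using fun_cong[OF cd] by simp
  have dcx: "D (C x) = x" for x using fun_cong[OF dc] by simp
  let ?B = "C \<circ> A \<circ> D"
  have sA: "sbl cinner A" using eff_sbl[OF A] .
  have sB: "sbl cinner ?B" using eff_sbl[OF B] .
  have bl: "bounded_linear A" using eff_bl[OF A] .
  have 1: "onorm ?B = onorm A" by (rule G[OF sA sB C D cd dc refl])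
  have e2: "(\<lambda>x. x - ?B x) = C \<circ> (\<lambda>x. x - A x) \<circ> D"
    using C by (auto simp: fun_eq_iff linear_simps cdx)
  have 2: "onorm (\<lambda>x. x - ?B x) = onorm (\<lambda>x. x - A x)"
    by (rule G[OF sbl_I[OF sA] sbl_I[OF sB] C D cd dc e2])
  have e3: "(\<lambda>x. ?B (x - ?B x)) = C \<circ> (\<lambda>x. A (x - A x)) \<circ> D"
    using D by (auto simp: fun_eq_iff linear_simps dcx)
  have 3: "onorm (\<lambda>x. ?B (x - ?B x)) = onorm (\<lambda>x. A (x - A x))"
    by (rule G[OF sbl_Q[OF sA] sbl_Q[OF sB] C D cd dc e3])
  show ?thesis unfolding S0_def using 1 2 3 by simp
qed

theorem main: "sharpness_measure cscale cinner S0"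
  unfolding sharpness_measure_def
proof (intro conjI ballI allI impI)
  fix A assume A: "A \<in> effects cscale cinner"
  show "0 \<le> S0 A" "S0 A \<le> 1" using S0_bounds[OF A] by auto
  show "S0 A = 0 \<longleftrightarrow> trivial_effect A" using S2hard[OF A] S0_trivial by blast
  show "S0 A = 1 \<longleftrightarrow> nontrivial_projection cscale cinner A" by (rule S3[OF A])
  show "S0 (\<lambda>x. x - A x) = S0 A" by (rule S4[OF A])
  fix C D assume "invertible_op cscale C D \<and> C \<circ> A \<circ> D \<in> effects cscale cinner"
  then show "S0 (C \<circ> A \<circ> D) = S0 A" using S5[OF A] by blast
next
  fix A and e :: real assume A: "A \<in> effects cscale cinner" and e: "0 < e"
  show "\<exists>d>0. \<forall>B\<in>effects cscale cinner. onorm (\<lambda>x. B x - A x) < d \<longrightarrow> \<bar>S0 B - S0 A\<bar> < e"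
  proof (intro exI[of _ "e / 5"] conjI ballI impI)
    show "0 < e / 5" using e by simp
    fix B assume B: "B \<in> effects cscale cinner" and "onorm (\<lambda>x. B x - A x) < e / 5"
    then show "\<bar>S0 B - S0 A\<bar> < e" using S0_cont[OF A B] by linarith
  qed
qed

end

theorem mainTheorem2:
  fixes cscale :: "complex \<Rightarrow> 'a::banach \<Rightarrow> 'a" and cinner :: "'a \<Rightarrow> 'a \<Rightarrow> complex"
  assumes "complex_hilbert cscale cinner"
    and "separable_space TYPE('a)"
  shows "sharpness_measure cscale cinner S0"
proof -
  interpret hil cscale cinner by standard (rule assms(1))
  show ?thesis by (rule main)
qed

end
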